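(* Let $(p_\lambda(\mathbf y))_{\lambda\in\mathcal P}$ be a full sequence of symmetric functions of binomial type associated with the quasi-genus $G$. Then for all partitions $\lambda$ and $\mu$, with $r=\ell(\mu)$, $$\mathbf D_\mu\,p_\lambda(\mathbf y)=\sum\frac{\lambda!}{\big(\lambda-\alpha^{(1)}-\cdots-\alpha^{(r)}\big)!\,\alpha^{(1)}!\cdots\alpha^{(r)}!}\,G_{\alpha^{(1)}}\cdots G_{\alpha^{(r)}}\;p_{\lambda-\alpha^{(1)}-\cdots-\alpha^{(r)}}(\mathbf y).$$ The sum runs over all tuples $(\alpha^{(1)},\dots,\alpha^{(r)})$ of vectors in $\mathbb Z_{\ge0}^{\ell(\lambda)}$ such that $|\alpha^{(i)}|=\mu_i$ for each $i$ and $\alpha^{(1)}+\cdots+\alpha^{(r)}\le\lambda$ componentwise.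
   Context: **Derivatives.** $\mathbf D_n$ is the linear operator on symmetric functions with $\mathbf D_nm_\nu=n!\,m_{\nu\setminus n}$ if $n$ is a part of $\nu$ (one part removed), and $0$ otherwise. For a partition $\mu$, $\mathbf D_\mu=\prod_{i=1}^{\ell(\mu)}\mathbf D_{\mu_i}/\mu_i!$. **Full sequence.** Partitions of $n$ are ordered by Macdonald's reverse lexicographic order. A full sequence is a family $(p_\lambda)_{\lambda\in\mathcal P}$ of homogeneous symmetric functions in $\mathbf y=(y_1,y_2,\dots)$ such that the largest partition with nonzero coefficient in the monomial expansion of $p_\lambda$ is $\lambda$. **Vector conventions.** For a finitely supported vector $\alpha$ of nonnegative integers, $p_\alpha$ and $G_\alpha$ mean the value at the sorted partition. We write $\alpha!=\prod\alpha_i!$, $|\alpha|=\sum\alpha_i$, and $\binom{\lambda}{\alpha}=\lambda!/(\alpha!(\lambda-\alpha)!)$. **Binomial type.** $(p_\lambda)$ is of binomial type if $p_\lambda(\mathbf y\cup\mathbf z)=\sum_{0\le\alpha\le\lambda}\binom{\lambda}{\alpha}p_\alpha(\mathbf y)p_{\lambda-\alpha}(\mathbf z)$ for disjoint variable sets. **Quasi-genus.** A quasi-genus is an assignment $\lambda\mapsto G_\lambda\in\mathbb C$ with $G_\emptyset=1$. **Association.** $(p_\lambda)$ is associated with $G$ if $$p_\lambda(\mathbf y)=\sum\frac{\lambda!}{\prod_j\alpha^{(j)}!}\prod_{j\ge1}G_{\alpha^{(j)}}y_j^{|\alpha^{(j)}|},$$ summed over families $(\alpha^{(j)})_{j\ge1}$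 of vectors in $\mathbb Z_{\ge0}^{\ell(\lambda)}$, almost all zero, with $\sum_j\alpha^{(j)}=\lambda$. *)

theory Defs
  imports Complex_Main "HOL-Library.Multiset"
begin

text \<open>A symmetric function
  is represented by its coefficients in the monomial basis: f \<nu> is the coefficient
  of the monomial symmetric function m_\<nu>.\<close>

type_synonym partition = "nat multiset"
type_synonym symfun = "partition \<Rightarrow> complex"

definition is_partition :: "partition \<Rightarrow> bool" where
  "is_partition \<nu> \<longleftrightarrow> 0 \<notin># \<nu>"

definition parts :: "partition \<Rightarrow> nat list" where
  "parts \<nu> = rev (sorted_list_of_multiset \<nu>)"

definition part_len :: "partition \<Rightarrow> nat" where
  "part_len \<nu> = size \<nu>"

definition vec_part :: "nat list \<Rightarrow> partition" where
  "vec_part \<alpha> = mset (filter (\<lambda>x. 0 < x) \<alpha>)"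

definition vfact :: "nat list \<Rightarrow> complex" where
  "vfact \<alpha> = (\<Prod>x\<leftarrow>\<alpha>. of_nat (fact x))"

definition homogeneous_symfun :: "symfun \<Rightarrow> bool" where
  "homogeneous_symfun f \<longleftrightarrow>
     (\<forall>\<nu>. f \<nu> \<noteq> 0 \<longrightarrow> is_partition \<nu>) \<and> (\<exists>d. \<forall>\<nu>. f \<nu> \<noteq> 0 \<longrightarrow> sum_mset \<nu> = d)"

definition part_fun :: "partition \<Rightarrow> nat \<Rightarrow> nat" where
  "part_fun \<nu> i = (if i < length (parts \<nu>) then parts \<nu> ! i else 0)"

definition revlex_gt :: "partition \<Rightarrow> partition \<Rightarrow> bool" where
  "revlex_gt \<nu> \<kappa> \<longleftrightarrow> (\<exists>i. (\<forall>j<i. part_fun \<nu> j = part_fun \<kappa> j) \<and> part_fun \<nu> i > part_fun \<kappa> i)"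

definition full_sequence :: "(partition \<Rightarrow> symfun) \<Rightarrow> bool" where
  "full_sequence p \<longleftrightarrow> (\<forall>lm. is_partition lm \<longrightarrow>
      homogeneous_symfun (p lm) \<and> p lm lm \<noteq> 0 \<and>
      (\<forall>\<nu>. p lm \<nu> \<noteq> 0 \<longrightarrow> \<not> revlex_gt \<nu> lm))"

text \<open>Binomial type, read off on the coefficient of m_\<rho>(y) m_\<sigma>(z): the monomial
  y^\<rho> z^\<sigma> in p_\<lambda>(y \<union> z) has coefficient p_\<lambda>[\<rho>+\<sigma>].\<close>
definition binomial_type :: "(partition \<Rightarrow> symfun) \<Rightarrow> bool" where
  "binomial_type p \<longleftrightarrow> (\<forall>lm \<rho> \<sigma>. is_partition lm \<longrightarrow> is_partition \<rho> \<longrightarrow> is_partition \<sigma> \<longrightarrow>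
     (let lam = parts lm; l = length lam in
      p lm (\<rho> + \<sigma>) =
       (\<Sum>\<alpha>\<in>{\<alpha>. length \<alpha> = l \<and> (\<forall>k<l. \<alpha> ! k \<le> lam ! k)}.
          (vfact lam / (vfact \<alpha> * vfact (map (\<lambda>k. lam ! k - \<alpha> ! k) [0..<l])))
          * p (vec_part \<alpha>) \<rho> * p (vec_part (map (\<lambda>k. lam ! k - \<alpha> ! k) [0..<l])) \<sigma>)))"

definition quasi_genus :: "(partition \<Rightarrow> complex) \<Rightarrow> bool" where
  "quasi_genus G \<longleftrightarrow> G {#} = 1"

text \<open>Association: the coefficient of y^\<nu> = y_1^{\<nu>_1} ... y_m^{\<nu>_m} in the defining
  series (families with index j > m are necessarily zero).\<close>
definition associated :: "(partition \<Rightarrow> symfun) \<Rightarrow> (partition \<Rightarrow> complex) \<Rightarrow> bool" where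
  "associated p G \<longleftrightarrow> (\<forall>lm \<nu>. is_partition lm \<longrightarrow> is_partition \<nu> \<longrightarrow>
     (let lam = parts lm; l = length lam; nu = parts \<nu>; m = length nu in
      p lm \<nu> =
       (\<Sum>as\<in>{as. length as = m \<and> (\<forall>j<m. length (as ! j) = l \<and> sum_list (as ! j) = nu ! j)
                   \<and> (\<forall>k<l. (\<Sum>j<m. as ! j ! k) = lam ! k)}.
          vfact lam / (\<Prod>j<m. vfact (as ! j)) * (\<Prod>j<m. G (vec_part (as ! j))))))"

text \<open>The derivative D_n: D_n m_\<nu> = n! m_{\<nu>\<setminus>n} if n is a part of \<nu>, else 0.
  On coefficients: (D_n f)[\<kappa>] = n! f[\<kappa> + {n}].\<close>
definition Dn :: "nat \<Rightarrow> symfun \<Rightarrow> symfun" where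
  "Dn n f = (\<lambda>\<kappa>. of_nat (fact n) * f (\<kappa> + {#n#}))"

fun Dlist :: "nat list \<Rightarrow> symfun \<Rightarrow> symfun" where
  "Dlist [] f = f"
| "Dlist (n # ns) f = (\<lambda>\<kappa>. Dn n (Dlist ns f) \<kappa> / of_nat (fact n))"

definition Dmu :: "partition \<Rightarrow> symfun \<Rightarrow> symfun" where
  "Dmu \<mu> f = Dlist (parts \<mu>) f"

end

theory Submission imports Defs "HOL-Combinatorics.List_Permutation"
begin

lemma sum_reidx:
  fixes \<phi> :: "nat \<Rightarrow> 'a::comm_monoid_add"
  assumes "inj_on g {..<n'}" "g ` {..<n'} \<subseteq> {..<n}" "\<forall>i<n. i \<notin> g ` {..<n'} \<longrightarrow> \<phi> i = 0"
  shows "(\<Sum>i<n. \<phi> i) = (\<Sum>k<n'. \<phi> (g k))"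
proof -
  have "(\<Sum>i<n. \<phi> i) = (\<Sum>i\<in>g ` {..<n'}. \<phi> i)"
    by (rule sum.mono_neutral_right) (use assms in auto)
  also have "\<dots> = (\<Sum>k<n'. \<phi> (g k))" by (rule sum.reindex[OF assms(1), unfolded comp_def])
  finally show ?thesis .
qed

lemma prod_reidx:
  fixes \<phi> :: "nat \<Rightarrow> 'a::comm_monoid_mult"
  assumes "inj_on g {..<n'}" "g ` {..<n'} \<subseteq> {..<n}" "\<forall>i<n. i \<notin> g ` {..<n'} \<longrightarrow> \<phi> i = 1"
  shows "(\<Prod>i<n. \<phi> i) = (\<Prod>k<n'. \<phi> (g k))"
proof -
  have "(\<Prod>i<n. \<phi> i) = (\<Prod>i\<in>g ` {..<n'}. \<phi> i)"
    by (rule prod.mono_neutral_right) (use assms in auto)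
  also have "\<dots> = (\<Prod>k<n'. \<phi> (g k))" by (rule prod.reindex[OF assms(1), unfolded comp_def])
  finally show ?thesis .
qed

lemma sum_list_nth: "sum_list (a::nat list) = (\<Sum>i<length a. a ! i)"
  by (simp add: sum_list_sum_nth atLeast0LessThan)

lemma vfact_nth: "vfact a = (\<Prod>i<length a. of_nat (fact (a ! i)))"
  unfolding vfact_def by (induction a) (simp_all del: prod.lessThan_Suc add: prod.lessThan_Suc_shift)

lemma mset_filter_sum: "mset (filter P xs) = sum_list (map (\<lambda>x. if P x then {#x#} else {#}) xs)"
  by (induction xs) auto

lemma vec_part_nth: "vec_part a = (\<Sum>i<length a. if 0 < a ! i then {#a ! i#} else {#})"
proof -
  have "vec_part a = sum_list (map (\<lambda>x. if 0 < x then {#x#} else {#}) (map (nth a) [0..<length a]))"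
    unfolding vec_part_def mset_filter_sum by (simp add: map_nth)
  also have "\<dots> = (\<Sum>i<length a. if 0 < a ! i then {#a ! i#} else {#})"
    by (simp add: sum_list_sum_nth atLeast0LessThan)
  finally show ?thesis .
qed

definition rx :: "(nat \<Rightarrow> nat) \<Rightarrow> nat \<Rightarrow> nat list \<Rightarrow> nat list" where
  "rx g n' a = map (\<lambda>k. a ! g k) [0..<n']"

lemma rx_props:
  assumes "inj_on g {..<n'}" "g ` {..<n'} \<subseteq> {..<length a}"
    "\<forall>i<length a. i \<notin> g ` {..<n'} \<longrightarrow> a ! i = 0"
  shows "sum_list (rx g n' a) = sum_list a" "vfact (rx g n' a) = vfact a"
    "vec_part (rx g n' a) = vec_part a"
proof -
  show "sum_list (rx g n' a) = sum_list a"
    unfolding sum_list_nth rx_def using sum_reidx[OF assms(1,2), of "nth a"] assms(3) by simp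
  have "\<forall>i<length a. i \<notin> g ` {..<n'} \<longrightarrow> (of_nat (fact (a ! i))::complex) = 1" using assms(3) by simp
  from prod_reidx[OF assms(1,2) this] show "vfact (rx g n' a) = vfact a"
    unfolding vfact_nth rx_def by simp
  show "vec_part (rx g n' a) = vec_part a"
    unfolding vec_part_nth rx_def using sum_reidx[OF assms(1,2), of "\<lambda>i. if 0 < a ! i then {#a ! i#} else {#}"] assms(3)
    by (auto intro!: sum.cong)
qed

definition Aset :: "nat \<Rightarrow> nat list \<Rightarrow> nat list \<Rightarrow> nat list list set" where
  "Aset m nu v = {as. length as = m \<and> (\<forall>j<m. length (as ! j) = length v \<and> sum_list (as ! j) = nu ! j)
     \<and> (\<forall>k<length v. (\<Sum>j<m. as ! j ! k) = v ! k)}"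

definition Fsum :: "(partition \<Rightarrow> complex) \<Rightarrow> nat \<Rightarrow> nat list \<Rightarrow> nat list \<Rightarrow> complex" where
  "Fsum G m nu v = (\<Sum>as\<in>Aset m nu v. vfact v / (\<Prod>j<m. vfact (as ! j)) * (\<Prod>j<m. G (vec_part (as ! j))))"

definition ex :: "(nat \<Rightarrow> nat) \<Rightarrow> nat \<Rightarrow> nat \<Rightarrow> nat list \<Rightarrow> nat list" where
  "ex g n' n b = map (\<lambda>i. if i \<in> g ` {..<n'} then b ! (the_inv_into {..<n'} g i) else 0) [0..<n]"

lemma Fsum_reidx:
  assumes inj: "inj_on g {..<n'}" and rng: "g ` {..<n'} \<subseteq> {..<length v}" and lw: "length w = n'"
    and wv: "\<forall>k<n'. w ! k = v ! (g k)" and z: "\<forall>i<length v. i \<notin> g ` {..<n'} \<longrightarrow> v ! i = 0"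
  shows "Fsum G m nu w = Fsum G m nu v"
proof -
  let ?n = "length v"
  define h where "h = map (rx g n')"
  define h' where "h' = map (ex g n' ?n)"
  have w_eq: "w = rx g n' v" using lw wv by (auto simp: rx_def intro!: nth_equalityI)
  have zero: "as ! j ! i = 0" if "as \<in> Aset m nu v" "j < m" "i < ?n" "i \<notin> g ` {..<n'}" for as j i
  proof -
    from that have "(\<Sum>j<m. as ! j ! i) = 0" using z by (auto simp: Aset_def)
    then show ?thesis using that(2) by simp
  qed
  have rx_ex: "rx g n' (ex g n' ?n b) = b" if "length b = n'" for b
  proof (rule nth_equalityI)
    show "length (rx g n' (ex g n' ?n b)) = length b" using that by (simp add: rx_def)
    fix i assume "i < length (rx g n' (ex g n' ?n b))"
    then have i: "i < n'" by (simp add: rx_def)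
    then have "g i < ?n" using rng by auto
    then show "rx g n' (ex g n' ?n b) ! i = b ! i"
      using i inj by (simp add: rx_def ex_def the_inv_into_f_f)
  qed
  have ex_zero: "\<forall>i<?n. i \<notin> g ` {..<n'} \<longrightarrow> ex g n' ?n b ! i = 0" for b by (simp add: ex_def)
  have ex_len: "length (ex g n' ?n b) = ?n" for b by (simp add: ex_def)
  have ex_rx: "ex g n' ?n (rx g n' a) = a" if "length a = ?n" "\<forall>i<?n. i \<notin> g ` {..<n'} \<longrightarrow> a ! i = 0" for a
    using that inj rng by (auto simp: rx_def ex_def the_inv_into_f_f intro!: nth_equalityI)
  have bij: "bij_betw h (Aset m nu v) (Aset m nu w)"
  proof (rule bij_betw_byWitness[where f'=h'])
    show "\<forall>as\<in>Aset m nu v. h' (h as) = as"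
    proof
      fix as assume as: "as \<in> Aset m nu v"
      show "h' (h as) = as"
        unfolding h_def h'_def
      proof (rule nth_equalityI)
        show "length (map (ex g n' ?n) (map (rx g n') as)) = length as" by simp
        fix j assume "j < length (map (ex g n' ?n) (map (rx g n') as))"
        then have j: "j < m" using as by (simp add: Aset_def)
        show "map (ex g n' ?n) (map (rx g n') as) ! j = as ! j"
          using ex_rx[of "as ! j"] zero[OF as j] as j by (auto simp: Aset_def)
      qed
    qed
    show "\<forall>bs\<in>Aset m nu w. h (h' bs) = bs"
    proof
      fix bs assume bs: "bs \<in> Aset m nu w"
      show "h (h' bs) = bs"
        unfolding h_def h'_def
        by (rule nth_equalityI) (use bs rx_ex lw in \<open>auto simp: Aset_def\<close>)
    qed
    show "h ` Aset m nu v \<subseteq> Aset m nu w"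
    proof
      fix bs assume "bs \<in> h ` Aset m nu v"
      then obtain as where as: "as \<in> Aset m nu v" and bs: "bs = h as" by auto
      have L: "length bs = m" using as bs by (simp add: h_def Aset_def)
      have S: "length (bs ! j) = length w \<and> sum_list (bs ! j) = nu ! j" if j: "j < m" for j
      proof -
        have "sum_list (rx g n' (as ! j)) = sum_list (as ! j)"
          by (rule rx_props(1)[OF inj]) (use as j rng zero[OF as j] in \<open>auto simp: Aset_def\<close>)
        then show ?thesis using as j lw by (simp add: bs h_def Aset_def rx_def)
      qed
      have C: "(\<Sum>j<m. bs ! j ! k) = w ! k" if k: "k < length w" for k
      proof -
        have "(\<Sum>j<m. bs ! j ! k) = (\<Sum>j<m. as ! j ! g k)"
          using as k lw by (auto simp: bs h_def Aset_def rx_def intro!: sum.cong)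
        also have "\<dots> = v ! g k" using as k lw rng by (auto simp: Aset_def)
        finally show ?thesis using wv k lw by simp
      qed
      show "bs \<in> Aset m nu w" using L S C by (simp add: Aset_def)
    qed
    show "h' ` Aset m nu w \<subseteq> Aset m nu v"
    proof
      fix as assume "as \<in> h' ` Aset m nu w"
      then obtain bs where bs: "bs \<in> Aset m nu w" and as: "as = h' bs" by auto
      have L: "length as = m" using as bs by (simp add: h'_def Aset_def)
      have S: "length (as ! j) = length v \<and> sum_list (as ! j) = nu ! j" if j: "j < m" for j
      proof -
        have "sum_list (rx g n' (ex g n' ?n (bs ! j))) = sum_list (ex g n' ?n (bs ! j))"
          by (rule rx_props(1)[OF inj]) (use rng ex_zero ex_len in auto)
        then show ?thesis using bs j lw rx_ex[of "bs ! j"] by (simp add: as h'_def Aset_def ex_len)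
      qed
      have C: "(\<Sum>j<m. as ! j ! i) = v ! i" if i: "i < ?n" for i
      proof (cases "i \<in> g ` {..<n'}")
        case True
        then obtain k where k: "k < n'" "i = g k" by auto
        have "(\<Sum>j<m. as ! j ! i) = (\<Sum>j<m. bs ! j ! k)"
          using bs i k inj by (auto simp: as h'_def Aset_def ex_def the_inv_into_f_f intro!: sum.cong)
        also have "\<dots> = w ! k" using bs k lw by (auto simp: Aset_def)
        finally show ?thesis using wv k by simp
      next
        case False
        then show ?thesis using bs i z by (auto simp: as h'_def Aset_def ex_def)
      qed
      show "as \<in> Aset m nu v" using L S C by (simp add: Aset_def)
    qed
  qed
  have T: "vfact w / (\<Prod>j<m. vfact (h as ! j)) * (\<Prod>j<m. G (vec_part (h as ! j)))
      = vfact v / (\<Prod>j<m. vfact (as ! j)) * (\<Prod>j<m. G (vec_part (as ! j)))"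
    if as: "as \<in> Aset m nu v" for as
  proof -
    have P: "vfact (h as ! j) = vfact (as ! j) \<and> vec_part (h as ! j) = vec_part (as ! j)" if j: "j < m" for j
    proof -
      have hj: "h as ! j = rx g n' (as ! j)" using as j by (simp add: h_def Aset_def)
      have A: "inj_on g {..<n'}" "g ` {..<n'} \<subseteq> {..<length (as ! j)}"
        "\<forall>i<length (as ! j). i \<notin> g ` {..<n'} \<longrightarrow> as ! j ! i = 0"
        using as j rng inj zero[OF as j] by (auto simp: Aset_def)
      show ?thesis using rx_props(2,3)[OF A] hj by simp
    qed
    have V: "vfact w = vfact v"
      unfolding w_eq by (rule rx_props(2)[OF inj rng]) (use z in auto)
    show ?thesis using P V by simp
  qed
  have "Fsum G m nu w = (\<Sum>as\<in>Aset m nu v. vfact w / (\<Prod>j<m. vfact (h as ! j)) * (\<Prod>j<m. G (vec_part (h as ! j))))"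
    unfolding Fsum_def by (rule sum.reindex_bij_betw[OF bij, symmetric])
  also have "\<dots> = Fsum G m nu v" unfolding Fsum_def by (rule sum.cong) (use T in auto)
  finally show ?thesis .
qed

lemma mset_parts[simp]: "mset (parts \<nu>) = \<nu>"
  by (simp add: parts_def)

lemma Fsum_parts: "Fsum G m nu (parts (vec_part \<alpha>)) = Fsum G m nu \<alpha>"
proof -
  define idx where "idx = filter (\<lambda>i. 0 < \<alpha> ! i) [0..<length \<alpha>]"
  define w where "w = parts (vec_part \<alpha>)"
  have fl: "filter (\<lambda>x. 0 < x) \<alpha> = map (nth \<alpha>) idx"
    unfolding idx_def by (subst map_nth[symmetric]) (simp add: filter_map comp_def)
  have "mset w = mset (map (nth \<alpha>) idx)"
    unfolding w_def mset_parts vec_part_def fl ..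
  from permutation_Ex_bij[OF this] obtain f where f0: "bij_betw f {..<length w} {..<length (map (nth \<alpha>) idx)}"
    and fw: "\<forall>i<length w. w ! i = map (nth \<alpha>) idx ! f i"
    by (elim exE conjE)
  have f: "bij_betw f {..<length w} {..<length idx}" using f0 by simp
  define g where "g = (\<lambda>i. idx ! f i)"
  have di: "distinct idx" by (simp add: idx_def)
  have inj: "inj_on g {..<length w}"
  proof -
    have "inj_on (nth idx) (f ` {..<length w})"
      using f di by (intro inj_on_nth) (auto simp: bij_betw_def)
    then show ?thesis using f unfolding g_def bij_betw_def
      using comp_inj_on[of f "{..<length w}" "nth idx"] by (simp add: comp_def)
  qed
  have img: "g ` {..<length w} = set idx"
  proof -
    have "g ` {..<length w} = nth idx ` (f ` {..<length w})" by (auto simp: g_def)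
    also have "\<dots> = nth idx ` {..<length idx}" using f by (simp add: bij_betw_def)
    also have "\<dots> = set idx" using nth_image[of "length idx" idx] by (simp add: lessThan_atLeast0)
    finally show ?thesis .
  qed
  have si: "set idx = {i. i < length \<alpha> \<and> 0 < \<alpha> ! i}" by (auto simp: idx_def)
  have "Fsum G m nu w = Fsum G m nu \<alpha>"
  proof (rule Fsum_reidx[OF inj])
    show "g ` {..<length w} \<subseteq> {..<length \<alpha>}" using img si by auto
    show "\<forall>k<length w. w ! k = \<alpha> ! g k"
    proof (intro allI impI)
      fix k assume k: "k < length w"
      then have "f k < length idx" using f by (auto simp: bij_betw_def)
      then show "w ! k = \<alpha> ! g k" using fw k by (simp add: g_def)
    qed
    show "\<forall>i<length \<alpha>. i \<notin> g ` {..<length w} \<longrightarrow> \<alpha> ! i = 0"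
      using img si by auto
  qed simp
  then show ?thesis by (simp add: w_def)
qed

lemma Dlist_eval: "Dlist ns f \<kappa> = f (\<kappa> + mset ns)"
  by (induction ns arbitrary: \<kappa>) (simp_all add: Dn_def)

lemma vfact_nz: "vfact a \<noteq> 0"
  unfolding vfact_def by (induction a) simp_all

lemma vec_part_partition: "is_partition (vec_part a)"
  by (simp add: is_partition_def vec_part_def)

theorem mainTheorem15:
  fixes p :: "partition \<Rightarrow> symfun" and G :: "partition \<Rightarrow> complex"
    and la mu0 :: partition
  assumes "full_sequence p" and "binomial_type p"
    and "quasi_genus G" and "associated p G"
    and "is_partition la" and "is_partition mu0"
  shows "Dmu mu0 (p la) =
    (let lam = parts la; l = length lam; mu = parts mu0; r = length mu in
     (\<lambda>\<kappa>. \<Sum>as\<in>{as. length as = r \<and> (\<forall>i<r. length (as ! i) = l \<and> sum_list (as ! i) = mu ! i)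
                    \<and> (\<forall>k<l. (\<Sum>i<r. as ! i ! k) \<le> lam ! k)}.
        (let rest = map (\<lambda>k. lam ! k - (\<Sum>i<r. as ! i ! k)) [0..<l] in
         vfact lam / (vfact rest * (\<Prod>i<r. vfact (as ! i)))
         * (\<Prod>i<r. G (vec_part (as ! i))) * p (vec_part rest) \<kappa>)))"
proof -
  define lam where "lam = parts la"
  define l where "l = length lam"
  define mu where "mu = parts mu0"
  define r where "r = length mu"
  define C where "C = {as. length as = r \<and> (\<forall>i<r. length (as ! i) = l \<and> sum_list (as ! i) = mu ! i)
                    \<and> (\<forall>k<l. (\<Sum>i<r. as ! i ! k) \<le> lam ! k)}"
  define rest where "rest = (\<lambda>as. map (\<lambda>k. lam ! k - (\<Sum>i<r. as ! i ! k)) [0..<l])"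
  define T where "T = (\<lambda>\<kappa> as. vfact lam / (vfact (rest as) * (\<Prod>i<r. vfact (as ! i)))
         * (\<Prod>i<r. G (vec_part (as ! i))) * p (vec_part (rest as)) \<kappa>)"
  have hom: "homogeneous_symfun (p lm)" if "is_partition lm" for lm
    using assms(1) that by (simp add: full_sequence_def)
  have goal: "p la (\<kappa> + mu0) = (\<Sum>as\<in>C. T \<kappa> as)" for \<kappa>
  proof (cases "is_partition \<kappa>")
    case False
    then have np: "\<not> is_partition (\<kappa> + mu0)" by (simp add: is_partition_def)
    have "p la (\<kappa> + mu0) = 0" using hom[OF assms(5)] np by (auto simp: homogeneous_symfun_def)
    moreover have "T \<kappa> as = 0" for as
      using hom[OF vec_part_partition] False by (auto simp: T_def homogeneous_symfun_def)
    ultimately show ?thesis by simp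
  next
    case True
    define B where "B = {\<alpha>. length \<alpha> = l \<and> (\<forall>k<l. \<alpha> ! k \<le> lam ! k)}"
    define ra where "ra = (\<lambda>\<alpha>. map (\<lambda>k. lam ! k - \<alpha> ! k) [0..<l])"
    define cs where "cs = (\<lambda>as::nat list list. map (\<lambda>k. (\<Sum>i<r. as ! i ! k)) [0..<l])"
    have bt: "p la (mu0 + \<kappa>) = (\<Sum>\<alpha>\<in>B. vfact lam / (vfact \<alpha> * vfact (ra \<alpha>))
        * p (vec_part \<alpha>) mu0 * p (vec_part (ra \<alpha>)) \<kappa>)"
      using assms(2)[unfolded binomial_type_def, rule_format, OF assms(5) assms(6) True]
      unfolding Let_def B_def ra_def l_def lam_def .
    have asc: "p (vec_part \<alpha>) mu0 = Fsum G r mu \<alpha>" for \<alpha>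
    proof -
      have "p (vec_part \<alpha>) mu0 = Fsum G r mu (parts (vec_part \<alpha>))"
        using assms(4)[unfolded associated_def, rule_format, OF vec_part_partition assms(6)]
        unfolding Let_def Fsum_def Aset_def r_def mu_def .
      then show ?thesis by (simp add: Fsum_parts)
    qed
    have finB: "finite B"
    proof (rule finite_subset[OF _ finite_lists_length_eq[OF finite_atMost[of "sum_list lam"]]])
      show "B \<subseteq> {xs. set xs \<subseteq> {..sum_list lam} \<and> length xs = l}"
      proof (rule subsetI, rule CollectI, rule conjI)
        fix \<alpha> assume a: "\<alpha> \<in> B"
        then show "length \<alpha> = l" by (simp add: B_def)
        show "set \<alpha> \<subseteq> {..sum_list lam}"
        proof
          fix x assume "x \<in> set \<alpha>"
          then obtain i where i: "i < length \<alpha>" "x = \<alpha> ! i" by (auto simp: in_set_conv_nth)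
          then have "x \<le> lam ! i" "i < length lam" using a by (auto simp: B_def l_def)
          moreover have "lam ! i \<le> sum_list lam" using \<open>i < length lam\<close> by (intro member_le_sum_list) auto
          ultimately show "x \<in> {..sum_list lam}" by simp
        qed
      qed
    qed
    have finC: "finite C"
    proof (rule finite_subset)
      show "C \<subseteq> {as. set as \<subseteq> {a. set a \<subseteq> {..sum_list mu} \<and> length a = l} \<and> length as = r}"
      proof (rule subsetI, rule CollectI, rule conjI)
        fix as assume asC: "as \<in> C"
        then show "length as = r" by (simp add: C_def)
        show "set as \<subseteq> {a. set a \<subseteq> {..sum_list mu} \<and> length a = l}"
        proof
          fix a assume a: "a \<in> set as"
          then obtain i where i: "i < r" "a = as ! i" using asC by (auto simp: in_set_conv_nth C_def)
          have "mu ! i \<le> sum_list mu" using i r_def by (intro member_le_sum_list) auto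
          moreover have "x \<le> sum_list a" if "x \<in> set a" for x using that by (auto intro!: member_le_sum_list)
          moreover have "length a = l" "sum_list a = mu ! i" using asC i by (auto simp: C_def)
          ultimately show "a \<in> {a. set a \<subseteq> {..sum_list mu} \<and> length a = l}" by fastforce
        qed
      qed
      show "finite {as. set as \<subseteq> {a. set a \<subseteq> {..sum_list mu} \<and> length a = l} \<and> length as = r}"
        by (intro finite_lists_length_eq finite_lists_length_eq[OF finite_atMost])
    qed
    have fib: "{as \<in> C. cs as = \<alpha>} = Aset r mu \<alpha>" if \<alpha>: "\<alpha> \<in> B" for \<alpha>
    proof
      show "{as \<in> C. cs as = \<alpha>} \<subseteq> Aset r mu \<alpha>"
      proof
        fix as assume "as \<in> {as \<in> C. cs as = \<alpha>}"
        then have asC: "as \<in> C" and e: "\<alpha> = cs as" by auto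
        have "\<forall>k<l. (\<Sum>j<r. as ! j ! k) = \<alpha> ! k" unfolding e by (simp add: cs_def)
        then show "as \<in> Aset r mu \<alpha>" using asC \<alpha> by (auto simp: C_def B_def Aset_def)
      qed
      show "Aset r mu \<alpha> \<subseteq> {as \<in> C. cs as = \<alpha>}"
        using \<alpha> by (auto simp: C_def B_def Aset_def cs_def intro!: nth_equalityI)
    qed
    have img: "cs ` C \<subseteq> B" by (auto simp: C_def B_def cs_def)
    have inner: "vfact lam / (vfact \<alpha> * vfact (ra \<alpha>)) * p (vec_part \<alpha>) mu0 * p (vec_part (ra \<alpha>)) \<kappa>
        = (\<Sum>as\<in>Aset r mu \<alpha>. T \<kappa> as)" if \<alpha>: "\<alpha> \<in> B" for \<alpha>
    proof -
      have e: "vfact lam / (vfact \<alpha> * vfact (ra \<alpha>)) * (vfact \<alpha> / (\<Prod>j<r. vfact (as ! j)) * (\<Prod>j<r. G (vec_part (as ! j))))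
          * p (vec_part (ra \<alpha>)) \<kappa> = T \<kappa> as" if as: "as \<in> Aset r mu \<alpha>" for as
      proof -
        have "rest as = ra \<alpha>" using as \<alpha> by (auto simp: rest_def ra_def Aset_def B_def)
        moreover have "(\<Prod>j<r. vfact (as ! j)) \<noteq> 0" by (simp add: vfact_nz)
        ultimately show ?thesis using vfact_nz[of \<alpha>] vfact_nz[of "ra \<alpha>"]
          by (simp add: T_def field_simps)
      qed
      show ?thesis unfolding asc Fsum_def sum_distrib_left sum_distrib_right
        by (rule sum.cong) (use e in auto)
    qed
    have "p la (\<kappa> + mu0) = (\<Sum>\<alpha>\<in>B. \<Sum>as\<in>Aset r mu \<alpha>. T \<kappa> as)"
      using bt inner by (simp add: add.commute)
    also have "\<dots> = (\<Sum>\<alpha>\<in>B. \<Sum>as\<in>{as \<in> C. cs as = \<alpha>}. T \<kappa> as)"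
      using fib by simp
    also have "\<dots> = (\<Sum>as\<in>C. T \<kappa> as)"
      using sum.group[OF finC finB img, of "T \<kappa>"] by simp
    finally show ?thesis .
  qed
  have "Dmu mu0 (p la) = (\<lambda>\<kappa>. \<Sum>as\<in>C. T \<kappa> as)"
    unfolding Dmu_def by (rule ext) (simp add: Dlist_eval goal)
  then show ?thesis
    unfolding Let_def C_def T_def rest_def lam_def l_def mu_def r_def .
qed

end
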